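(* Let $\sigma$ and $\tau$ be matchings, with $s=|\sigma|$ and $t=|\tau|$. The following are equivalent: (i) $\sigma\leq\tau$; (ii) $1(\sigma+1)1\ \leq\ 1(\tau+1)1(t+2)(t+2)$; (iii) $\sigma(s+1)(s+1)\ \leq\ 1(\tau+1)(t+2)(t+2)1$.
   Context: A matching of order $n$ is a partition of $[2n]$ into blocks (edges) of size two, identified with the word in $[n]^{2n}$ where both vertices of an edge carry the same letter and letters appear in increasing order of left vertices. $|\sigma|$ is the number of edges. For a matching $\alpha$, $\alpha+1$ denotes the word of $\alpha$ with $1$ added to each letter, and words are concatenated: e.g. $1(\sigma+1)1$ is $\sigma$ enclosed by one new edge, $1(\tau+1)1(t+2)(t+2)$ is $\tau$ enclosed by a new edge followed by a further separate edge, $\sigma(s+1)(s+1)$ is $\sigma$ followed by a separate edge, and $1(\tau+1)(t+2)(t+2)1$ is $\tau$ followed by a separate edge, all enclosed by a new edge. $\sigma\le\tau$ means $\sigma$ is a pattern of $\tau$: if $|\sigma|=k$, there are $i_1<\dots<i_{2k}$ with $\{i_p,i_q\}\in\tau$ iff $\{p,q\}\in\sigma$. *)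

theory Defs
  imports Main
begin

text \<open>A matching of order n is represented by its word in [n]^(2n): a list of
  naturals of length 2n, in which every letter 1..n occurs exactly twice (the two
  vertices of an edge), and letters appear in increasing order of their left
  vertices (before any occurrence of letter b, every smaller letter a >= 1 has
  already occurred).\<close>

definition is_matching :: "nat list \<Rightarrow> bool" where
  "is_matching w \<longleftrightarrow>
     (\<exists>n. length w = 2 * n \<and> set w \<subseteq> {1..n} \<and>
          (\<forall>k\<in>{1..n}. count_list w k = 2) \<and>
          (\<forall>j<length w. \<forall>a. 1 \<le> a \<and> a < w ! j \<longrightarrow> (\<exists>i<j. w ! i = a)))"

definition msize :: "nat list \<Rightarrow> nat" where
  "msize w = length w div 2"

definition mshift :: "nat list \<Rightarrow> nat list" where
  "mshift w = map (\<lambda>x. x + 1) w"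

text \<open>Pattern containment sigma <= tau: positions i_1 < ... < i_(2k) in tau such that
  {i_p, i_q} is an edge of tau iff {p, q} is an edge of sigma.\<close>
definition mpattern :: "nat list \<Rightarrow> nat list \<Rightarrow> bool" where
  "mpattern \<sigma> \<tau> \<longleftrightarrow>
     (\<exists>f. strict_mono_on {..<length \<sigma>} f \<and> (\<forall>p<length \<sigma>. f p < length \<tau>) \<and>
          (\<forall>p<length \<sigma>. \<forall>q<length \<sigma>. p \<noteq> q \<longrightarrow>
              (\<tau> ! (f p) = \<tau> ! (f q) \<longleftrightarrow> \<sigma> ! p = \<sigma> ! q)))"

end

theory Submission
  imports Defs
begin


lemma window:
  fixes \<sigma> \<tau> S T :: "nat list"
  assumes mono: "\<And>p q. p < q \<Longrightarrow> q < length \<sigma> \<Longrightarrow> g (a+p) < g (a+q)"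
  and rng: "\<And>p. p < length \<sigma> \<Longrightarrow> c \<le> g (a+p) \<and> g (a+p) < c + length \<tau>"
  and Tn: "\<And>i. i < length \<tau> \<Longrightarrow> T!(c+i) = h (\<tau>!i)" and hi: "inj h"
  and Sn: "\<And>p. p < length \<sigma> \<Longrightarrow> S!(a+p) = k (\<sigma>!p)" and ki: "inj k"
  and rel: "\<And>p q. p < length \<sigma> \<Longrightarrow> q < length \<sigma> \<Longrightarrow> p \<noteq> q \<Longrightarrow>
      (T!(g(a+p)) = T!(g(a+q))) = (S!(a+p) = S!(a+q))"
  shows "mpattern \<sigma> \<tau>"
  unfolding mpattern_def
proof (intro exI[of _ "\<lambda>p. g (a+p) - c"] conjI allI impI)
  show "strict_mono_on {..<length \<sigma>} (\<lambda>p. g (a + p) - c)"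
  proof (rule strict_mono_onI)
    fix p q assume "p \<in> {..<length \<sigma>}" "q \<in> {..<length \<sigma>}" "p < q"
    then show "g (a + p) - c < g (a + q) - c" using mono[of p q] rng[of p] rng[of q] by auto
  qed
next
  fix p assume "p < length \<sigma>" then show "g (a + p) - c < length \<tau>" using rng[of p] by auto
next
  fix p q assume pq: "p < length \<sigma>" "q < length \<sigma>" "p \<noteq> q"
  have e1: "T!(g(a+p)) = h (\<tau> ! (g (a+p) - c))" using rng[of p] Tn[of "g (a+p) - c"] pq by auto
  have e2: "T!(g(a+q)) = h (\<tau> ! (g (a+q) - c))" using rng[of q] Tn[of "g (a+q) - c"] pq by auto
  have "(\<tau> ! (g (a+p) - c) = \<tau> ! (g (a+q) - c)) = (T!(g(a+p)) = T!(g(a+q)))"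
    using e1 e2 hi by (auto dest: injD)
  also have "\<dots> = (S!(a+p) = S!(a+q))" using rel pq by blast
  also have "\<dots> = (\<sigma>!p = \<sigma>!q)" using Sn pq ki by (auto dest: injD)
  finally show "(\<tau> ! (g (a+p) - c) = \<tau> ! (g (a+q) - c)) = (\<sigma>!p = \<sigma>!q)" .
qed

lemma matching_facts:
  assumes "is_matching w"
  shows "length w = 2 * msize w" "\<And>i. i < length w \<Longrightarrow> 1 \<le> w!i \<and> w!i \<le> msize w"
    "\<And>i. i < length w \<Longrightarrow> \<exists>j<length w. j \<noteq> i \<and> w!j = w!i"
proof -
  obtain n where n: "length w = 2 * n" "set w \<subseteq> {1..n}" "\<forall>k\<in>{1..n}. count_list w k = 2"
    using assms unfolding is_matching_def by blast
  have ms: "msize w = n" using n unfolding msize_def by simp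
  show "length w = 2 * msize w" using n ms by simp
  show "\<And>i. i < length w \<Longrightarrow> 1 \<le> w!i \<and> w!i \<le> msize w"
    using n(2) ms nth_mem by fastforce
  fix i assume i: "i < length w"
  show "\<exists>j<length w. j \<noteq> i \<and> w!j = w!i"
  proof (rule ccontr)
    assume nj: "\<not> ?thesis"
    have in1: "w!i \<in> {1..n}" using n(2) i nth_mem by fastforce
    have d: "w = take i w @ [w!i] @ drop (Suc i) w" by (simp only: append_Cons append_Nil, rule id_take_nth_drop[OF i])
    have a: "w!i \<notin> set (take i w)"
    proof
      assume "w!i \<in> set (take i w)"
      then obtain j where "j < length (take i w)" "take i w ! j = w!i" by (auto simp: in_set_conv_nth)
      then have "j < length w" "w!j = w!i" "j \<noteq> i" using i by auto
      then show False using nj by blast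
    qed
    have b: "w!i \<notin> set (drop (Suc i) w)"
    proof
      assume "w!i \<in> set (drop (Suc i) w)"
      then obtain j where "j < length (drop (Suc i) w)" "drop (Suc i) w ! j = w!i" by (auto simp: in_set_conv_nth)
      then have "Suc i + j < length w" "w!(Suc i + j) = w!i" by auto
      moreover have "Suc i + j \<noteq> i" by simp
      ultimately show False using nj by blast
    qed
    have "count_list (take i w @ [w!i] @ drop (Suc i) w) (w!i) = 1"
      using a b by (simp add: count_list_append count_list_0_iff)
    moreover have "count_list w (w!i) = count_list (take i w @ [w!i] @ drop (Suc i) w) (w!i)"
      using d by (rule arg_cong[where f="\<lambda>x. count_list x (w!i)"])
    ultimately have "count_list w (w!i) = 1" by simp
    then show False using n(3) in1 by auto
  qed
qed



lemma nthA: "p < length x + 2 \<Longrightarrow> ([1] @ mshift x @ [1]) ! p = (if p = 0 \<or> p = length x + 1 then 1 else x!(p-1)+1)"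
  by (auto simp: nth_append mshift_def nth_Cons')
lemma nthB: "i < length y + 4 \<Longrightarrow> ([1] @ mshift y @ [1, t+2, t+2]) ! i = (if i = 0 \<or> i = length y + 1 then 1 else if i \<ge> length y + 2 then t+2 else y!(i-1)+1)"
  by (auto simp: nth_append mshift_def nth_Cons')
lemma nthC: "p < length x + 2 \<Longrightarrow> (x @ [s+1,s+1]) ! p = (if p < length x then x!p else s+1)"
  by (auto simp: nth_append nth_Cons')
lemma nthD: "i < length y + 4 \<Longrightarrow> ([1] @ mshift y @ [t+2,t+2,1]) ! i = (if i = 0 \<or> i = length y + 3 then 1 else if i \<ge> length y + 1 then t+2 else y!(i-1)+1)"
  by (auto simp: nth_append mshift_def nth_Cons')



lemma dir1f:
  assumes sb: "\<And>i. i < length \<sigma> \<Longrightarrow> 1 \<le> \<sigma>!i"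
    and tb: "\<And>i. i < length \<tau> \<Longrightarrow> 1 \<le> \<tau>!i \<and> \<tau>!i \<le> t"
    and P: "mpattern \<sigma> \<tau>"
  shows "mpattern ([1] @ mshift \<sigma> @ [1]) ([1] @ mshift \<tau> @ [1, t+2, t+2])"
proof -
  obtain f where fm: "strict_mono_on {..<length \<sigma>} f" and fr: "\<And>p. p<length \<sigma> \<Longrightarrow> f p < length \<tau>"
    and fe: "\<And>p q. p<length \<sigma> \<Longrightarrow> q<length \<sigma> \<Longrightarrow> p \<noteq> q \<Longrightarrow> (\<tau> ! (f p) = \<tau> ! (f q)) = (\<sigma> ! p = \<sigma> ! q)"
    using P unfolding mpattern_def by blast
  have fr': "f (p-1) < length \<tau>" if "0 < p" "p < length \<sigma> + 1" for p
  proof -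
    have "p - 1 < length \<sigma>" using that by linarith
    then show ?thesis by (rule fr)
  qed
  let ?S = "[1] @ mshift \<sigma> @ [1]" and ?T = "[1] @ mshift \<tau> @ [1, t+2, t+2]"
  define g where "g p = (if p = 0 then 0 else if p = length \<sigma> + 1 then length \<tau> + 1 else Suc (f (p-1)))" for p
  show ?thesis unfolding mpattern_def
  proof (intro exI[of _ g] conjI allI impI)
    show "strict_mono_on {..<length ([1] @ mshift \<sigma> @ [1])} g"
    proof (rule strict_mono_onI)
      fix p q assume "p \<in> {..<length ([1] @ mshift \<sigma> @ [1])}" "q \<in> {..<length ([1] @ mshift \<sigma> @ [1])}" "p < q"
      then have pq: "p < q" "q < length \<sigma> + 2" by (auto simp: mshift_def)
      show "g p < g q"
      proof (cases "p = 0")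
        case True then show ?thesis using pq by (simp add: g_def)
      next
        case False
        then have "p - 1 < length \<sigma>" using pq by auto
        then have "f (p-1) < length \<tau>" by (rule fr)
        moreover have "q \<noteq> length \<sigma> + 1 \<Longrightarrow> f (p-1) < f (q-1)"
          using fm pq False by (auto intro!: strict_mono_onD[OF fm])
        ultimately show ?thesis using False pq by (auto simp: g_def)
      qed
    qed
  next
    fix p assume "p < length ([1] @ mshift \<sigma> @ [1])"
    then have pl: "p < length \<sigma> + 2" by (simp add: mshift_def)
    have "p \<noteq> 0 \<Longrightarrow> p \<noteq> length \<sigma> + 1 \<Longrightarrow> p - 1 < length \<sigma>" using pl by linarith
    then have "p \<noteq> 0 \<Longrightarrow> p \<noteq> length \<sigma> + 1 \<Longrightarrow> f (p - 1) < length \<tau>" using fr by blast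
    then show "g p < length ([1] @ mshift \<tau> @ [1, t+2, t+2])"
      by (auto simp: g_def mshift_def)
  next
    fix p q assume a: "p < length ([1] @ mshift \<sigma> @ [1])" "q < length ([1] @ mshift \<sigma> @ [1])" "p \<noteq> q"
    then have pq: "p < length \<sigma> + 2" "q < length \<sigma> + 2" "p \<noteq> q" by (auto simp: mshift_def)
    have gr: "g p < length \<tau> + 4" if "p < length \<sigma> + 2" for p
    proof (cases "p = 0 \<or> p = length \<sigma> + 1")
      case True thus ?thesis by (auto simp: g_def)
    next
      case False hence "0 < p" "p < length \<sigma> + 1" using that by auto
      thus ?thesis using fr'[of p] by (auto simp: g_def)
    qed
    show "(([1] @ mshift \<tau> @ [1, t+2, t+2]) ! g p = ([1] @ mshift \<tau> @ [1, t+2, t+2]) ! g q) =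
          (([1] @ mshift \<sigma> @ [1]) ! p = ([1] @ mshift \<sigma> @ [1]) ! q)"
    proof -
      have X: "\<And>p. p < length \<sigma> + 2 \<Longrightarrow> ([1] @ mshift \<tau> @ [1, t+2, t+2]) ! (g p) =
          (if p = 0 \<or> p = length \<sigma> + 1 then 1 else \<tau> ! (f (p-1)) + 1)"
        subgoal for p using nthB[of "g p" \<tau> t] gr[of p] fr'[of p] by (auto simp: g_def)
        done
      have Y: "\<And>p. 0 < p \<Longrightarrow> p < length \<sigma> + 1 \<Longrightarrow> 1 \<le> \<tau> ! (f (p-1))"
        using tb fr' by auto
      have Z: "\<And>p. 0 < p \<Longrightarrow> p < length \<sigma> + 1 \<Longrightarrow> 1 \<le> \<sigma> ! (p-1)"
        using sb by auto
      have V: "(0 < r \<and> r < length \<sigma> + 1 \<longrightarrow> ?T ! (g r) = \<tau> ! (f (r-1)) + 1 \<and> ?S ! r = \<sigma> ! (r-1) + 1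
           \<and> 1 \<le> \<tau> ! (f (r-1)) \<and> 1 \<le> \<sigma> ! (r-1) \<and> r - 1 < length \<sigma>) \<and>
           (\<not> (0 < r \<and> r < length \<sigma> + 1) \<longrightarrow> ?T ! (g r) = 1 \<and> ?S ! r = 1)"
        if "r < length \<sigma> + 2" for r
        using X[OF that] nthA[OF that] Y[of r] Z[of r] that by auto
      show ?thesis
      proof (cases "0 < p \<and> p < length \<sigma> + 1")
        case pi: True
        then have ep: "?T ! (g p) = \<tau> ! (f (p-1)) + 1" "?S ! p = \<sigma> ! (p-1) + 1"
           "1 \<le> \<tau> ! (f (p-1))" "1 \<le> \<sigma> ! (p-1)" "p - 1 < length \<sigma>" using V[OF pq(1)] by blast+
        show ?thesis
        proof (cases "0 < q \<and> q < length \<sigma> + 1")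
          case qi: True
          then have eq: "?T ! (g q) = \<tau> ! (f (q-1)) + 1" "?S ! q = \<sigma> ! (q-1) + 1"
             "q - 1 < length \<sigma>" using V[OF pq(2)] by blast+
          have "p - 1 \<noteq> q - 1" using pi qi pq by auto
          then show ?thesis unfolding ep(1,2) eq(1,2) using fe[OF ep(5) eq(3)] by simp
        next
          case False
          then have eq: "?T ! (g q) = 1" "?S ! q = 1" using V[OF pq(2)] by blast+
          show ?thesis unfolding ep(1,2) eq using ep(3,4) by simp
        qed
      next
        case pi: False
        then have ep: "?T ! (g p) = 1" "?S ! p = 1" using V[OF pq(1)] by blast+
        show ?thesis
        proof (cases "0 < q \<and> q < length \<sigma> + 1")
          case qi: True
          then have eq: "?T ! (g q) = \<tau> ! (f (q-1)) + 1" "?S ! q = \<sigma> ! (q-1) + 1"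
             "1 \<le> \<tau> ! (f (q-1))" "1 \<le> \<sigma> ! (q-1)" using V[OF pq(2)] by blast+
          show ?thesis unfolding ep eq(1,2) using eq(3,4) by simp
        next
          case False
          then have eq: "?T ! (g q) = 1" "?S ! q = 1" using V[OF pq(2)] by blast+
          show ?thesis unfolding ep eq by simp
        qed
      qed
    qed
  qed
qed



lemma dir1b:
  assumes sb: "\<And>i. i < length \<sigma> \<Longrightarrow> 1 \<le> \<sigma>!i"
    and tb: "\<And>i. i < length \<tau> \<Longrightarrow> 1 \<le> \<tau>!i \<and> \<tau>!i \<le> t"
    and P: "mpattern ([1] @ mshift \<sigma> @ [1]) ([1] @ mshift \<tau> @ [1, t+2, t+2])"
  shows "mpattern \<sigma> \<tau>"
proof -
  let ?S = "[1] @ mshift \<sigma> @ [1]" and ?T = "[1] @ mshift \<tau> @ [1, t+2, t+2]"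
  obtain g where gm: "strict_mono_on {..<length ?S} g" and gr: "\<And>p. p<length ?S \<Longrightarrow> g p < length ?T"
    and ge: "\<And>p q. p<length ?S \<Longrightarrow> q<length ?S \<Longrightarrow> p \<noteq> q \<Longrightarrow> (?T ! (g p) = ?T ! (g q)) = (?S ! p = ?S ! q)"
    using P unfolding mpattern_def by blast
  have lS: "length ?S = length \<sigma> + 2" and lT: "length ?T = length \<tau> + 4" by (auto simp: mshift_def)
  have mono: "g p < g q" if "p < q" "q < length \<sigma> + 2" for p q
    using gm that lS by (auto intro!: strict_mono_onD[OF gm])
  have Sn: "\<And>p. p < length \<sigma> \<Longrightarrow> ?S!(1+p) = Suc (\<sigma>!p)"
    by (auto simp: nth_append mshift_def)
  have Tn: "\<And>i. i < length \<tau> \<Longrightarrow> ?T!(1+i) = Suc (\<tau>!i)"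
    by (auto simp: nth_append mshift_def)
  show ?thesis
  proof (rule window[where a=1 and c=1 and g=g and h=Suc and k=Suc and S="?S" and T="?T"])
    show "\<And>p q. p < q \<Longrightarrow> q < length \<sigma> \<Longrightarrow> g (1 + p) < g (1 + q)" using mono by auto
  next
    fix p assume p: "p < length \<sigma>"
    define x where "x = g 0"
    define y where "y = g (length \<sigma> + 1)"
    define z where "z = g (1 + p)"
    have xz: "x < z" using mono[of 0 "1+p"] p by (auto simp: x_def z_def)
    have zy: "z < y" using mono[of "1+p" "length \<sigma> + 1"] p by (auto simp: y_def z_def)
    have yb: "y < length \<tau> + 4" using gr[of "length \<sigma> + 1"] lS lT by (auto simp: y_def)
    have Sxy: "?T ! x = ?T ! y" using ge[of 0 "length \<sigma> + 1"] lS nthA[of 0 \<sigma>] nthA[of "length \<sigma> + 1" \<sigma>]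
      by (auto simp: x_def y_def)
    have Sxz: "?T ! x \<noteq> ?T ! z" using ge[of 0 "1+p"] lS nthA[of 0 \<sigma>] Sn[OF p] sb[OF p] p
      by (auto simp: x_def z_def)
    have Tx: "?T ! x = (if x = 0 \<or> x = length \<tau> + 1 then 1 else if x \<ge> length \<tau> + 2 then t+2 else \<tau>!(x-1)+1)"
      using nthB[of x \<tau> t] xz zy yb by auto
    have Ty: "?T ! y = (if y = 0 \<or> y = length \<tau> + 1 then 1 else if y \<ge> length \<tau> + 2 then t+2 else \<tau>!(y-1)+1)"
      using nthB[of y \<tau> t] xz zy yb by auto
    have tbx: "0 < x \<Longrightarrow> x < length \<tau> + 1 \<Longrightarrow> \<tau>!(x-1) \<le> t" using tb[of "x-1"] by auto
    have "z \<le> length \<tau>"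
    proof (rule ccontr)
      assume "\<not> z \<le> length \<tau>"
      then have "y \<ge> length \<tau> + 2" using zy by auto
      then have "?T ! y = t + 2" using Ty by auto
      moreover have "x < length \<tau> + 2" using xz zy yb by auto
      ultimately show False using Sxy Tx tbx by (auto split: if_splits)
    qed
    then show "1 \<le> g (1 + p) \<and> g (1 + p) < 1 + length \<tau>" using xz by (auto simp: z_def)
  next
    show "\<And>i. i < length \<tau> \<Longrightarrow> ?T ! (1 + i) = Suc (\<tau> ! i)" by (rule Tn)
  next
    show "inj Suc" by simp
  next
    show "\<And>p. p < length \<sigma> \<Longrightarrow> ?S ! (1 + p) = Suc (\<sigma> ! p)" by (rule Sn)
  next
    show "inj Suc" by simp
  next
    fix p q assume "p < length \<sigma>" "q < length \<sigma>" "p \<noteq> q"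
    then show "(?T ! g (1 + p) = ?T ! g (1 + q)) = (?S ! (1 + p) = ?S ! (1 + q))"
      using ge[of "1+p" "1+q"] lS by auto
  qed
qed



lemma dir2f:
  assumes sb: "\<And>i. i < length \<sigma> \<Longrightarrow> \<sigma>!i \<le> s"
    and tb: "\<And>i. i < length \<tau> \<Longrightarrow> 1 \<le> \<tau>!i \<and> \<tau>!i \<le> t"
    and P: "mpattern \<sigma> \<tau>"
  shows "mpattern (\<sigma> @ [s+1, s+1]) ([1] @ mshift \<tau> @ [t+2, t+2, 1])"
proof -
  let ?S = "\<sigma> @ [s+1, s+1]" and ?T = "[1] @ mshift \<tau> @ [t+2, t+2, 1]"
  obtain f where fm: "strict_mono_on {..<length \<sigma>} f" and fr: "\<And>p. p<length \<sigma> \<Longrightarrow> f p < length \<tau>"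
    and fe: "\<And>p q. p<length \<sigma> \<Longrightarrow> q<length \<sigma> \<Longrightarrow> p \<noteq> q \<Longrightarrow> (\<tau> ! (f p) = \<tau> ! (f q)) = (\<sigma> ! p = \<sigma> ! q)"
    using P unfolding mpattern_def by blast
  have lS: "length ?S = length \<sigma> + 2" and lT: "length ?T = length \<tau> + 4" by (auto simp: mshift_def)
  define g where "g p = (if p < length \<sigma> then Suc (f p) else length \<tau> + 1 + (p - length \<sigma>))" for p
  have gr: "g p < length \<tau> + 3" if "p < length \<sigma> + 2" for p
    using that fr[of p] by (auto simp: g_def)
  have X: "?T ! (g p) = (if p < length \<sigma> then \<tau> ! (f p) + 1 else t + 2)" if "p < length \<sigma> + 2" for p
    using nthD[of "g p" \<tau> t] gr[OF that] fr[of p] that by (auto simp: g_def)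
  show ?thesis unfolding mpattern_def
  proof (intro exI[of _ g] conjI allI impI)
    show "strict_mono_on {..<length ?S} g"
    proof (rule strict_mono_onI)
      fix p q assume "p \<in> {..<length ?S}" "q \<in> {..<length ?S}" "p < q"
      then have pq: "p < q" "q < length \<sigma> + 2" by auto
      show "g p < g q"
      proof (cases "q < length \<sigma>")
        case True then show ?thesis using pq strict_mono_onD[OF fm, of p q] by (auto simp: g_def)
      next
        case False then show ?thesis using pq fr[of p] by (auto simp: g_def)
      qed
    qed
  next
    fix p assume "p < length ?S"
    then have "p < length \<sigma> + 2" using lS by simp
    then have "g p < length \<tau> + 3" by (rule gr)
    then show "g p < length ?T" using lT by simp
  next
    fix p q assume a: "p < length ?S" "q < length ?S" "p \<noteq> q"
    then have pq: "p < length \<sigma> + 2" "q < length \<sigma> + 2" by auto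
    show "(?T ! g p = ?T ! g q) = (?S ! p = ?S ! q)"
    proof -
      have V: "(r < length \<sigma> \<longrightarrow> ?T ! (g r) = \<tau> ! (f r) + 1 \<and> ?S ! r = \<sigma> ! r
           \<and> \<tau> ! (f r) \<le> t \<and> \<sigma> ! r \<le> s) \<and>
           (\<not> r < length \<sigma> \<longrightarrow> ?T ! (g r) = t + 2 \<and> ?S ! r = s + 1)"
        if "r < length \<sigma> + 2" for r
        using X[OF that] nthC[OF that] sb[of r] tb[of "f r"] fr[of r] that by auto
      show ?thesis
      proof (cases "p < length \<sigma>")
        case pi: True
        then have ep: "?T ! (g p) = \<tau> ! (f p) + 1" "?S ! p = \<sigma> ! p"
           "\<tau> ! (f p) \<le> t" "\<sigma> ! p \<le> s" using V[OF pq(1)] by blast+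
        show ?thesis
        proof (cases "q < length \<sigma>")
          case qi: True
          then have eq: "?T ! (g q) = \<tau> ! (f q) + 1" "?S ! q = \<sigma> ! q" using V[OF pq(2)] by blast+
          show ?thesis unfolding ep(1,2) eq(1,2) using fe[OF pi qi a(3)] by simp
        next
          case False
          then have eq: "?T ! (g q) = t + 2" "?S ! q = s + 1" using V[OF pq(2)] by blast+
          show ?thesis unfolding ep(1,2) eq using ep(3,4) by simp
        qed
      next
        case pi: False
        then have ep: "?T ! (g p) = t + 2" "?S ! p = s + 1" using V[OF pq(1)] by blast+
        show ?thesis
        proof (cases "q < length \<sigma>")
          case qi: True
          then have eq: "?T ! (g q) = \<tau> ! (f q) + 1" "?S ! q = \<sigma> ! q"
             "\<tau> ! (f q) \<le> t" "\<sigma> ! q \<le> s" using V[OF pq(2)] by blast+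
          show ?thesis unfolding ep eq(1,2) using eq(3,4) by simp
        next
          case False
          then have eq: "?T ! (g q) = t + 2" "?S ! q = s + 1" using V[OF pq(2)] by blast+
          show ?thesis unfolding ep eq by simp
        qed
      qed
    qed
  qed
qed

lemma dir2b:
  assumes sb: "\<And>i. i < length \<sigma> \<Longrightarrow> \<sigma>!i \<le> s"
    and sp: "\<And>i. i < length \<sigma> \<Longrightarrow> \<exists>j<length \<sigma>. j \<noteq> i \<and> \<sigma>!j = \<sigma>!i"
    and tb: "\<And>i. i < length \<tau> \<Longrightarrow> 1 \<le> \<tau>!i \<and> \<tau>!i \<le> t"
    and P: "mpattern (\<sigma> @ [s+1, s+1]) ([1] @ mshift \<tau> @ [t+2, t+2, 1])"
  shows "mpattern \<sigma> \<tau>"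
proof -
  let ?S = "\<sigma> @ [s+1, s+1]" and ?T = "[1] @ mshift \<tau> @ [t+2, t+2, 1]"
  obtain g where gm: "strict_mono_on {..<length ?S} g" and gr: "\<And>p. p<length ?S \<Longrightarrow> g p < length ?T"
    and ge: "\<And>p q. p<length ?S \<Longrightarrow> q<length ?S \<Longrightarrow> p \<noteq> q \<Longrightarrow> (?T ! (g p) = ?T ! (g q)) = (?S ! p = ?S ! q)"
    using P unfolding mpattern_def by blast
  have lS: "length ?S = length \<sigma> + 2" and lT: "length ?T = length \<tau> + 4" by (auto simp: mshift_def)
  have mono: "g p < g q" if "p < q" "q < length \<sigma> + 2" for p q
    using gm that lS by (auto intro!: strict_mono_onD[OF gm])
  have Sn: "\<And>p. p < length \<sigma> \<Longrightarrow> ?S!(0+p) = id (\<sigma>!p)"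
    by (auto simp: nth_append)
  have Tn: "\<And>i. i < length \<tau> \<Longrightarrow> ?T!(1+i) = Suc (\<tau>!i)"
    by (auto simp: nth_append mshift_def)
  have Tv: "?T ! i = (if i = 0 \<or> i = length \<tau> + 3 then 1 else if i \<ge> length \<tau> + 1 then t+2 else \<tau>!(i-1)+1)"
    if "i < length \<tau> + 4" for i using nthD[OF that] .
  have tbx: "0 < x \<Longrightarrow> x < length \<tau> + 1 \<Longrightarrow> \<tau>!(x-1) \<le> t" for x using tb[of "x-1"] by auto
  have y1: "g (length \<sigma> + 1) < length \<tau> + 4" using gr[of "length \<sigma> + 1"] lS lT by auto
  have y0: "g (length \<sigma>) < g (length \<sigma> + 1)" using mono by auto
  have Sxy: "?T ! g (length \<sigma>) = ?T ! g (length \<sigma> + 1)"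
    using ge[of "length \<sigma>" "length \<sigma> + 1"] lS by (auto simp: nth_append)
  have key: "1 \<le> g p \<and> g p \<le> length \<tau>" if p: "p < length \<sigma>" for p
  proof
    show "1 \<le> g p"
    proof (rule ccontr)
      assume "\<not> 1 \<le> g p"
      then have g0: "g p = 0" by auto
      obtain q where q: "q < length \<sigma>" "q \<noteq> p" "\<sigma>!q = \<sigma>!p" using sp[OF p] by blast
      have "?T ! g q = ?T ! g p" using ge[of q p] q p lS by (auto simp: nth_append)
      then have T1: "?T ! g q = 1" using g0 Tv[of 0] by simp
      have gq0: "g q \<noteq> 0" using g0 q p mono[of p q] mono[of q p] by (cases "p < q") auto
      have "g q < g (length \<sigma>)" using mono[of q "length \<sigma>"] q by auto
      then have gq: "g q < length \<tau> + 2" using y0 y1 by linarith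
      show False
      proof (cases "g q \<ge> length \<tau> + 1")
        case True
        then have "?T ! g q = t + 2" using Tv[of "g q"] gq gq0 by auto
        then show False using T1 by simp
      next
        case False
        then have "?T ! g q = \<tau>!(g q - 1) + 1" using Tv[of "g q"] gq gq0 by auto
        moreover have "1 \<le> \<tau>!(g q - 1)" using tb[of "g q - 1"] False gq0 by auto
        ultimately show False using T1 by simp
      qed
    qed
  next
    show "g p \<le> length \<tau>"
    proof (rule ccontr)
      assume A: "\<not> g p \<le> length \<tau>"
      have "g p < g (length \<sigma>)" using mono[of p "length \<sigma>"] p by auto
      then have gL: "g (length \<sigma>) = length \<tau> + 2" and gL1: "g (length \<sigma> + 1) = length \<tau> + 3"
        using A y0 y1 by linarith+
      have "?T ! g (length \<sigma> + 1) = 1" unfolding gL1 using Tv[of "length \<tau> + 3"] by simp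
      moreover have "?T ! g (length \<sigma>) = t + 2" unfolding gL using Tv[of "length \<tau> + 2"] by simp
      ultimately show False using Sxy by simp
    qed
  qed
  show ?thesis
  proof (rule window[where a=0 and c=1 and g=g and h=Suc and k=id and S="?S" and T="?T"])
    show "\<And>p q. p < q \<Longrightarrow> q < length \<sigma> \<Longrightarrow> g (0 + p) < g (0 + q)" using mono by auto
  next
    fix p assume "p < length \<sigma>"
    then show "1 \<le> g (0 + p) \<and> g (0 + p) < 1 + length \<tau>" using key[of p] by auto
  next
    show "\<And>i. i < length \<tau> \<Longrightarrow> ?T ! (1 + i) = Suc (\<tau> ! i)" by (rule Tn)
  next
    show "inj Suc" by simp
  next
    show "\<And>p. p < length \<sigma> \<Longrightarrow> ?S ! (0 + p) = id (\<sigma> ! p)" by (rule Sn)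
  next
    show "inj (id :: nat \<Rightarrow> nat)" by simp
  next
    fix p q assume "p < length \<sigma>" "q < length \<sigma>" "p \<noteq> q"
    then show "(?T ! g (0 + p) = ?T ! g (0 + q)) = (?S ! (0 + p) = ?S ! (0 + q))"
      using ge[of p q] lS by auto
  qed
qed

theorem lemma1:
  fixes \<sigma> \<tau> :: "nat list"
  assumes "is_matching \<sigma>" and "is_matching \<tau>"
  defines "s \<equiv> msize \<sigma>" and "t \<equiv> msize \<tau>"
  shows "(mpattern \<sigma> \<tau> \<longleftrightarrow>
            mpattern ([1] @ mshift \<sigma> @ [1]) ([1] @ mshift \<tau> @ [1, t + 2, t + 2]))
       \<and> (mpattern \<sigma> \<tau> \<longleftrightarrow>
            mpattern (\<sigma> @ [s + 1, s + 1]) ([1] @ mshift \<tau> @ [t + 2, t + 2, 1]))"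
proof -
  note ms = matching_facts[OF assms(1)] and mt = matching_facts[OF assms(2)]
  have sb1: "\<And>i. i < length \<sigma> \<Longrightarrow> 1 \<le> \<sigma>!i" using ms(2) by blast
  have sb2: "\<And>i. i < length \<sigma> \<Longrightarrow> \<sigma>!i \<le> s" using ms(2) unfolding s_def by blast
  have sp: "\<And>i. i < length \<sigma> \<Longrightarrow> \<exists>j<length \<sigma>. j \<noteq> i \<and> \<sigma>!j = \<sigma>!i" using ms(3) by blast
  have tb: "\<And>i. i < length \<tau> \<Longrightarrow> 1 \<le> \<tau>!i \<and> \<tau>!i \<le> t" using mt(2) unfolding t_def by blast
  show ?thesis
    using dir1f[OF sb1 tb] dir1b[OF sb1 tb] dir2f[OF sb2 tb] dir2b[OF sb2 sp tb] by blast
qed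

end
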